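(* Let $d\ge1$, $L>0$, $N\ge1$ an integer, and let $p:[0,L]^d\to[0,\infty)$ be a probability density function that is Lipschitz continuous (w.r.t. the Euclidean norm) with constant $\ell_p$ and satisfies $p(x)>0$ for some $x\in\mathbb{X}_N^d$. Let $f:[0,L]^d\to\mathbb{R}$ be bounded and Lipschitz continuous with constant $\ell_f$, and write $\|f\|_{\mathsf{L}^\infty}=\sup_x|f(x)|$. Then $$|\mu(p)-\mu(\bar p_N)|\le 2\|f\|_{\mathsf{L}^\infty}\frac{\ell_p\sqrt d\,L^{d+1}}{N}+\ell_f\sqrt d\,\frac LN,$$ $$|\sigma^2(p)-\sigma^2(\bar p_N)|\le 6\|f\|_{\mathsf{L}^\infty}^2\frac{\ell_p\sqrt d\,L^{d+1}}{N}+4\|f\|_{\mathsf{L}^\infty}\ell_f\sqrt d\,\frac LN.$$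
   Context: $\mathbb{X}_N=\frac{L}{N}\{0,1,\dots,N-1\}$ and $\mathbb{X}_N^d\subset[0,L]^d$ is the uniform grid. The discretization $\bar p_N:\mathbb{X}_N^d\to[0,1]$ of $p$ is $\bar p_N(x)=p(x)/S$ with $S=\sum_{x\in\mathbb{X}_N^d}p(x)$. For a distribution $Q$ (a density on $[0,L]^d$ or a probability mass function on $\mathbb{X}_N^d$), $\mu(Q)=\mathbb{E}_{x\sim Q}[f(x)]$, $m_2(Q)=\mathbb{E}_{x\sim Q}[f(x)^2]$ and $\sigma^2(Q)=m_2(Q)-\mu(Q)^2$. *)

theory Defs
  imports "HOL-Analysis.Analysis"
begin

text \<open>The cube [0,L]^d, with d = CARD('n).\<close>
definition cube :: "real \<Rightarrow> (real ^ 'n) set" where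
  "cube L = cbox 0 (\<chi> i. L)"

definition grid :: "real \<Rightarrow> nat \<Rightarrow> (real ^ 'n) set" where
  "grid L N = {x. \<forall>i. \<exists>k<N. x $ i = L / real N * real k}"

definition mu_cont :: "real \<Rightarrow> (real ^ 'n \<Rightarrow> real) \<Rightarrow> (real ^ 'n \<Rightarrow> real) \<Rightarrow> real" where
  "mu_cont L p f = integral (cube L) (\<lambda>x. f x * p x)"

definition m2_cont :: "real \<Rightarrow> (real ^ 'n \<Rightarrow> real) \<Rightarrow> (real ^ 'n \<Rightarrow> real) \<Rightarrow> real" where
  "m2_cont L p f = integral (cube L) (\<lambda>x. (f x)^2 * p x)"

definition var_cont :: "real \<Rightarrow> (real ^ 'n \<Rightarrow> real) \<Rightarrow> (real ^ 'n \<Rightarrow> real) \<Rightarrow> real" where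
  "var_cont L p f = m2_cont L p f - (mu_cont L p f)^2"

definition pbar :: "real \<Rightarrow> nat \<Rightarrow> (real ^ 'n \<Rightarrow> real) \<Rightarrow> real ^ 'n \<Rightarrow> real" where
  "pbar L N p x = p x / (\<Sum>y\<in>grid L N. p y)"

definition mu_disc :: "real \<Rightarrow> nat \<Rightarrow> (real ^ 'n \<Rightarrow> real) \<Rightarrow> (real ^ 'n \<Rightarrow> real) \<Rightarrow> real" where
  "mu_disc L N p f = (\<Sum>x\<in>grid L N. f x * pbar L N p x)"

definition m2_disc :: "real \<Rightarrow> nat \<Rightarrow> (real ^ 'n \<Rightarrow> real) \<Rightarrow> (real ^ 'n \<Rightarrow> real) \<Rightarrow> real" where
  "m2_disc L N p f = (\<Sum>x\<in>grid L N. (f x)^2 * pbar L N p x)"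

definition var_disc :: "real \<Rightarrow> nat \<Rightarrow> (real ^ 'n \<Rightarrow> real) \<Rightarrow> (real ^ 'n \<Rightarrow> real) \<Rightarrow> real" where
  "var_disc L N p f = m2_disc L N p f - (mu_disc L N p f)^2"

definition supnorm :: "real \<Rightarrow> (real ^ 'n \<Rightarrow> real) \<Rightarrow> real" where
  "supnorm L f = Sup ((\<lambda>x. \<bar>f x\<bar>) ` cube L)"

end

theory Submission
  imports Defs
begin


lemma cell_dist:
  fixes x y :: "real ^ 'n"
  assumes "h \<ge> 0" "\<And>i. x$i \<le> y$i \<and> y$i \<le> x$i + h"
  shows "dist y x \<le> sqrt (real CARD('n)) * h"
proof -
  have "norm (y - x) \<le> norm ((\<chi> i. h) :: real ^ 'n)"
  proof (rule norm_le_componentwise_cart)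
    fix i show "norm ((y - x) $ i) \<le> norm (((\<chi> i. h) :: real ^ 'n) $ i)"
      using assms(1) assms(2)[of i] by simp
  qed
  also have "\<dots> = sqrt (real CARD('n) * h^2)"
    by (simp add: norm_vec_def L2_set_def)
  also have "\<dots> = sqrt (real CARD('n)) * h"
    using assms(1) by (simp add: real_sqrt_mult)
  finally show ?thesis by (simp add: dist_norm)
qed

lemma grid_finite: "finite (grid L N :: (real^'n) set)"
proof -
  have "grid L N \<subseteq> (\<lambda>k. \<chi> i. L / real N * real (k i)) ` (PiE (UNIV::'n set) (\<lambda>_. {..<N}))"
  proof
    fix x :: "real^'n" assume "x \<in> grid L N"
    then have "\<forall>i. \<exists>k. k < N \<and> x $ i = L / real N * real k" by (auto simp: grid_def)
    then obtain k where k: "\<And>i. k i < N \<and> x $ i = L / real N * real (k i)" by metis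
    have "x = (\<lambda>k. \<chi> i. L / real N * real (k i)) k" using k by (simp add: vec_eq_iff)
    moreover have "k \<in> PiE UNIV (\<lambda>_. {..<N})" using k by auto
    ultimately show "x \<in> (\<lambda>k. \<chi> i. L / real N * real (k i)) ` (PiE (UNIV::'n set) (\<lambda>_. {..<N}))" by blast
  qed
  moreover have "finite (PiE (UNIV::'n set) (\<lambda>_. {..<N}))" by (simp add: finite_PiE)
  ultimately show ?thesis using finite_subset by blast
qed

lemma grid_division:
  assumes L: "L > 0" and N: "N \<ge> 1"
  shows "(\<lambda>x. cbox x (x + (\<chi> i. L / real N))) ` grid L N division_of (cube L :: (real^'n) set)"
proof -
  define h where "h = L / real N"
  have h: "h > 0" using L N by (simp add: h_def)
  have hN: "h * real N = L" using N by (simp add: h_def)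
  have cell_sub: "cbox x (x + (\<chi> i. h)) \<subseteq> cube L" if gx: "x \<in> grid L N" for x :: "real^'n"
  proof
    fix y assume y: "y \<in> cbox x (x + (\<chi> i. h))"
    show "y \<in> cube L" unfolding cube_def mem_box_cart
    proof
      fix i
      obtain k where k: "k < N" "x $ i = h * real k" using gx unfolding grid_def h_def by blast
      have "real k + 1 \<le> real N" using k by simp
      then have "h * real k + h \<le> L" using h hN
        by (metis distrib_left mult.right_neutral mult_left_mono less_le)
      moreover have "0 \<le> h * real k" using h by simp
      ultimately show "(0::real^'n) $ i \<le> y $ i \<and> y $ i \<le> (\<chi> i. L) $ i"
      proof -
        have "x $ i \<le> y $ i \<and> y $ i \<le> x $ i + h" using y unfolding mem_box_cart by simp
        then have "0 \<le> y $ i" "y $ i \<le> L" using k \<open>h * real k + h \<le> L\<close> \<open>0 \<le> h * real k\<close> by linarith+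
        then show ?thesis by simp
      qed
    qed
  qed
  show ?thesis unfolding h_def[symmetric]
  proof (rule division_ofI)
    show "finite ((\<lambda>x. cbox x (x + (\<chi> i. h))) ` (grid L N :: (real^'n) set))" using grid_finite by blast
    show "K \<subseteq> cube L" if "K \<in> (\<lambda>x. cbox x (x + (\<chi> i. h))) ` grid L N" for K :: "(real^'n) set"
      using that cell_sub by blast
    show "K \<noteq> {}" if kk: "K \<in> (\<lambda>x. cbox x (x + (\<chi> i. h))) ` grid L N" for K :: "(real^'n) set"
    proof -
      obtain x where "K = cbox x (x + (\<chi> i. h))" using kk by blast
      moreover have "x \<in> cbox x (x + (\<chi> i. h))" using h unfolding mem_box_cart by simp
      ultimately show ?thesis by blast
    qed
    show "\<exists>a b. K = cbox a b" if "K \<in> (\<lambda>x. cbox x (x + (\<chi> i. h))) ` grid L N" for K :: "(real^'n) set"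
      using that by blast
    show "interior K1 \<inter> interior K2 = {}"
      if KK: "K1 \<in> (\<lambda>x. cbox x (x + (\<chi> i. h))) ` grid L N" "K2 \<in> (\<lambda>x. cbox x (x + (\<chi> i. h))) ` grid L N"
        "K1 \<noteq> K2" for K1 K2 :: "(real^'n) set"
    proof -
      obtain x1 x2 where x: "x1 \<in> grid L N" "x2 \<in> grid L N"
        "K1 = cbox x1 (x1 + (\<chi> i. h))" "K2 = cbox x2 (x2 + (\<chi> i. h))" using KK(1,2) by blast
      then have "x1 \<noteq> x2" using KK(3) by blast
      then obtain i where i: "x1 $ i \<noteq> x2 $ i" by (auto simp: vec_eq_iff)
      obtain k1 where k1: "x1 $ i = h * real k1" using x(1) unfolding grid_def h_def by blast
      obtain k2 where k2: "x2 $ i = h * real k2" using x(2) unfolding grid_def h_def by blast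
      have "k1 \<noteq> k2" using i k1 k2 by auto
      show ?thesis
      proof (rule ccontr)
        assume "interior K1 \<inter> interior K2 \<noteq> {}"
        then obtain y where "y \<in> box x1 (x1 + (\<chi> i. h))" "y \<in> box x2 (x2 + (\<chi> i. h))"
          using x by auto
        then have y1: "h * real k1 < y $ i" "y $ i < h * real k1 + h"
          and y2: "h * real k2 < y $ i" "y $ i < h * real k2 + h"
          using k1 k2 unfolding mem_box_cart by (auto dest!: spec[of _ i])
        have "h * real k1 < h * (real k2 + 1)" using y1 y2 by (simp add: algebra_simps)
        then have "real k1 < real k2 + 1" using h by simp
        moreover have "h * real k2 < h * (real k1 + 1)" using y1 y2 by (simp add: algebra_simps)
        then have "real k2 < real k1 + 1" using h by simp
        ultimately show False using \<open>k1 \<noteq> k2\<close> by linarith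
      qed
    qed
    show "\<Union> ((\<lambda>x. cbox x (x + (\<chi> i. h))) ` grid L N) = (cube L :: (real^'n) set)"
    proof
      show "\<Union> ((\<lambda>x. cbox x (x + (\<chi> i. h))) ` grid L N) \<subseteq> (cube L :: (real^'n) set)" using cell_sub by blast
      show "(cube L :: (real^'n) set) \<subseteq> \<Union> ((\<lambda>x. cbox x (x + (\<chi> i. h))) ` grid L N)"
      proof
        fix y :: "real^'n" assume y: "y \<in> cube L"
        define k where "k i = min (nat (floor (y $ i / h))) (N - 1)" for i
        define x :: "real^'n" where "x = (\<chi> i. h * real (k i))"
        have "k i < N" for i using N by (simp add: k_def)
        then have "x \<in> grid L N" unfolding grid_def h_def[symmetric] by (auto simp: x_def)
        moreover have "y \<in> cbox x (x + (\<chi> i. h))"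
          unfolding mem_box_cart
        proof
          fix i
          have yi: "0 \<le> y $ i" "y $ i \<le> L" using y unfolding cube_def mem_box_cart by auto
          have fl: "real_of_int (floor (y $ i / h)) \<le> y $ i / h" "y $ i / h < real_of_int (floor (y $ i / h)) + 1"
            by linarith+
          have fl0: "0 \<le> floor (y $ i / h)" using yi h by simp
          show "x $ i \<le> y $ i \<and> y $ i \<le> (x + (\<chi> i. h)) $ i"
          proof (cases "nat (floor (y $ i / h)) \<le> N - 1")
            case True
            then have "real (k i) = real_of_int (floor (y $ i / h))" using fl0 by (simp add: k_def)
            then have "real (k i) \<le> y $ i / h" "y $ i / h \<le> real (k i) + 1" using fl by auto
            then have "h * real (k i) \<le> y $ i" "y $ i \<le> h * real (k i) + h"
              using h by (simp_all add: field_simps)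
            then show ?thesis by (simp add: x_def)
          next
            case False
            then have "real (k i) = real N - 1" using N by (simp add: k_def)
            moreover have "real N \<le> y $ i / h" using False fl fl0 N by linarith
            then have "L \<le> y $ i" using h hN by (simp add: field_simps)
            moreover have "h * real (k i) = L - h"
            proof -
              have "h * real (k i) = h * (real N - 1)" using \<open>real (k i) = real N - 1\<close> by simp
              also have "\<dots> = L - h" using hN by (simp add: right_diff_distrib)
              finally show ?thesis .
            qed
            ultimately have "h * real (k i) \<le> y $ i" "y $ i \<le> h * real (k i) + h"
              using yi h by linarith+
            then show ?thesis by (simp add: x_def)
          qed
        qed
        ultimately show "y \<in> \<Union> ((\<lambda>x. cbox x (x + (\<chi> i. h))) ` grid L N)" by blast
      qed
    qed
  qed
qed

lemma grid_sub_cube: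
  assumes "x \<in> grid L N" "L > 0" "N \<ge> 1"
  shows "(x::real^'n) \<in> cube L"
  unfolding cube_def mem_box_cart
proof
  fix i
  obtain k where k: "k < N" "x $ i = L / real N * real k" using assms(1) unfolding grid_def by blast
  have "real k \<le> real N" using k by simp
  then have "L / real N * real k \<le> L / real N * real N"
    using assms by (intro mult_left_mono) auto
  then have "x $ i \<le> L" using k assms by simp
  moreover have "0 \<le> x $ i" using k assms by simp
  ultimately show "(0::real^'n) $ i \<le> x $ i \<and> x $ i \<le> (\<chi> i. L) $ i" by simp
qed

lemma riemann:
  fixes p g :: "real ^ 'n \<Rightarrow> real"
  assumes L: "L > 0" and N: "N \<ge> 1"
    and pnn: "\<forall>x\<in>cube L. p x \<ge> 0"
    and pint: "(p has_integral 1) (cube L)"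
    and plip: "lipschitz_on lp (cube L) p"
    and gc: "continuous_on (cube L) g"
    and gM: "\<forall>x\<in>cube L. \<bar>g x\<bar> \<le> M"
    and gK: "\<forall>x\<in>cube L. \<forall>y\<in>cube L. \<bar>g x - g y\<bar> \<le> K * dist x y"
    and K: "K \<ge> 0"
  shows "\<bar>integral (cube L) (\<lambda>x. g x * p x) - (\<Sum>x\<in>grid L N. g x * p x) * (L / real N) ^ CARD('n)\<bar>
         \<le> K * sqrt (real CARD('n)) * (L / real N) + M * lp * sqrt (real CARD('n)) * (L / real N) * L ^ CARD('n)"
proof -
  define h where "h = L / real N"
  define sd where "sd = sqrt (real CARD('n))"
  define C where "C x = cbox x (x + (\<chi> i. h))" for x :: "real^'n"
  define G where "G = (grid L N :: (real^'n) set)"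
  have h: "h > 0" using L N by (simp add: h_def)
  have lp: "lp \<ge> 0" using plip lipschitz_on_nonneg by blast
  have D: "C ` G division_of cube L" using grid_division[OF L N] by (simp add: C_def G_def h_def)
  have finG: "finite G" using grid_finite by (simp add: G_def)
  have Cne: "x \<in> C x" for x using h by (simp add: C_def mem_box_cart less_imp_le)
  have injC: "inj_on C G"
  proof
    fix x y assume "x \<in> G" "y \<in> G" "C x = C y"
    then show "x = y" using Cne[of x] unfolding C_def eq_cbox by auto
  qed
  have reidx: "(\<Sum>x\<in>G. \<phi> (C x)) = (\<Sum>K\<in>C ` G. \<phi> K)" for \<phi> :: "(real^'n) set \<Rightarrow> real"
    using sum.reindex[OF injC, of \<phi>] by simp
  have CsubG: "C x \<subseteq> cube L" if "x \<in> G" for x using D that by (auto dest: division_ofD(2))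
  have xcube: "x \<in> cube L" if "x \<in> G" for x using CsubG Cne that by blast
  have contC: "measure lborel (C x) = h ^ CARD('n)" for x :: "real^'n"
  proof -
    have "C x \<noteq> {}" using Cne by blast
    then show ?thesis unfolding C_def by (simp add: content_cbox_cart)
  qed
  have contcube: "measure lborel (cube L :: (real^'n) set) = L ^ CARD('n)"
  proof -
    have "(cube L :: (real^'n) set) \<noteq> {}" using L by (auto simp: cube_def interval_ne_empty_cart)
    then show ?thesis unfolding cube_def by (simp add: content_cbox_cart)
  qed
  have pc: "continuous_on (cube L) p" using plip lipschitz_on_continuous_on by blast
  have gpi: "(\<lambda>x. g x * p x) integrable_on cube L"
    unfolding cube_def by (rule integrable_continuous) (use gc pc in \<open>auto intro!: continuous_intros simp: cube_def\<close>)
  define F where "F y = K * sd * h * p y + M * lp * sd * h" for y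
  have Fint: "(F has_integral (K * sd * h * 1 + measure lborel (cube L :: (real^'n) set) *\<^sub>R (M * lp * sd * h))) (cube L)"
    unfolding F_def cube_def
    by (rule has_integral_add[OF has_integral_mult_right has_integral_const]) (use pint in \<open>simp add: cube_def\<close>)
  have Fi: "F integrable_on cube L" using Fint by blast
  have cell: "\<bar>integral (C x) (\<lambda>y. g y * p y) - g x * p x * h ^ CARD('n)\<bar> \<le> integral (C x) F"
    if x: "x \<in> G" for x
  proof -
    have gpiC: "(\<lambda>y. g y * p y) integrable_on C x"
      using integrable_on_subcbox[OF gpi] CsubG[OF x] by (simp add: C_def)
    have FiC: "F integrable_on C x"
      using integrable_on_subcbox[OF Fi] CsubG[OF x] by (simp add: C_def)
    have ic: "(\<lambda>y. g x * p x) integrable_on C x" unfolding C_def by (rule integrable_const)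
    have "integral (C x) (\<lambda>y. g x * p x) = measure lborel (C x) *\<^sub>R (g x * p x)"
      unfolding C_def by (rule integral_const)
    then have I0: "integral (C x) (\<lambda>y. g x * p x) = g x * p x * h ^ CARD('n)"
      using contC[of x] by (metis mult.commute real_scaleR_def)
    have "integral (C x) (\<lambda>y. g y * p y - g x * p x)
        = integral (C x) (\<lambda>y. g y * p y) - integral (C x) (\<lambda>y. g x * p x)"
      by (rule integral_diff[OF gpiC ic])
    then have "integral (C x) (\<lambda>y. g y * p y) - g x * p x * h ^ CARD('n)
        = integral (C x) (\<lambda>y. g y * p y - g x * p x)"
      using I0 by metis
    also have "\<bar>\<dots>\<bar> \<le> integral (C x) F"
    proof (rule integral_norm_bound_integral[OF integrable_diff[OF gpiC] FiC, simplified])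
      show "(\<lambda>y. g x * p x) integrable_on C x" unfolding C_def by (rule integrable_const)
      fix y assume y: "y \<in> C x"
      have yc: "y \<in> cube L" using y CsubG[OF x] by blast
      have xc: "x \<in> cube L" using xcube[OF x] .
      have dxy: "dist y x \<le> sd * h"
        unfolding sd_def by (rule cell_dist) (use h y in \<open>auto simp: C_def mem_box_cart\<close>)
      have e1: "\<bar>g y - g x\<bar> \<le> K * (sd * h)"
        using gK yc xc dxy K by (meson mult_left_mono order_trans)
      have e2: "\<bar>p y - p x\<bar> \<le> lp * (sd * h)"
        using lipschitz_onD[OF plip yc xc] dxy lp by (metis dist_real_def mult_left_mono order_trans)
      have py: "p y \<ge> 0" using pnn yc by blast
      have gx: "\<bar>g x\<bar> \<le> M" using gM xc by blast
      have "g y * p y - g x * p x = (g y - g x) * p y + g x * (p y - p x)" by (simp add: algebra_simps)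
      then have "\<bar>g y * p y - g x * p x\<bar> \<le> \<bar>g y - g x\<bar> * p y + \<bar>g x\<bar> * \<bar>p y - p x\<bar>"
        using py by (simp add: abs_mult) (metis abs_triangle_ineq abs_mult abs_of_nonneg)
      also have "\<dots> \<le> K * (sd * h) * p y + M * (lp * (sd * h))"
        using e1 e2 gx py by (intro add_mono mult_mono) auto
      also have "\<dots> = F y" by (simp add: F_def algebra_simps)
      finally show "\<bar>g y * p y - g x * p x\<bar> \<le> F y" .
    qed
    finally show ?thesis .
  qed
  have "integral (cube L) (\<lambda>x. g x * p x) = (\<Sum>x\<in>G. integral (C x) (\<lambda>y. g y * p y))"
    using integral_combine_division_topdown[OF gpi D] reidx[of "\<lambda>K. integral K (\<lambda>y. g y * p y)"] by simp
  moreover have "integral (cube L) F = (\<Sum>x\<in>G. integral (C x) F)"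
    using integral_combine_division_topdown[OF Fi D] reidx[of "\<lambda>K. integral K F"] by simp
  ultimately have "\<bar>integral (cube L) (\<lambda>x. g x * p x) - (\<Sum>x\<in>G. g x * p x) * h ^ CARD('n)\<bar>
      = \<bar>\<Sum>x\<in>G. (integral (C x) (\<lambda>y. g y * p y) - g x * p x * h ^ CARD('n))\<bar>"
    by (simp add: sum_subtractf sum_distrib_right)
  also have "\<dots> \<le> (\<Sum>x\<in>G. \<bar>integral (C x) (\<lambda>y. g y * p y) - g x * p x * h ^ CARD('n)\<bar>)"
    by (rule sum_abs)
  also have "\<dots> \<le> (\<Sum>x\<in>G. integral (C x) F)" by (rule sum_mono) (rule cell)
  also have "\<dots> = integral (cube L) F" using \<open>integral (cube L) F = _\<close> by simp
  also have "\<dots> = K * sd * h + M * lp * sd * h * L ^ CARD('n)"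
    using integral_unique[OF Fint] contcube by simp
  finally show ?thesis by (simp add: h_def sd_def G_def)
qed

lemma approx:
  fixes p g :: "real ^ 'n \<Rightarrow> real"
  assumes L: "L > 0" and N: "N \<ge> 1"
    and pnn: "\<forall>x\<in>cube L. p x \<ge> 0"
    and pint: "(p has_integral 1) (cube L)"
    and plip: "lipschitz_on lp (cube L) p"
    and ppos: "\<exists>x\<in>grid L N. p x > 0"
    and gc: "continuous_on (cube L) g"
    and gM: "\<forall>x\<in>cube L. \<bar>g x\<bar> \<le> M"
    and gK: "\<forall>x\<in>cube L. \<forall>y\<in>cube L. \<bar>g x - g y\<bar> \<le> K * dist x y"
    and K: "K \<ge> 0"
  shows "\<bar>integral (cube L) (\<lambda>x. g x * p x) - (\<Sum>x\<in>grid L N. g x * pbar L N p x)\<bar>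
         \<le> 2 * M * (lp * sqrt (real CARD('n)) * L ^ (CARD('n) + 1) / real N)
           + K * sqrt (real CARD('n)) * (L / real N)"
    and "\<bar>integral (cube L) (\<lambda>x. g x * p x)\<bar> \<le> M"
    and "\<bar>\<Sum>x\<in>grid L N. g x * pbar L N p x\<bar> \<le> M"
proof -
  define G where "G = (grid L N :: (real^'n) set)"
  define S where "S = (\<Sum>x\<in>G. p x)"
  define T where "T = (\<Sum>x\<in>G. g x * p x)"
  define c where "c = (L / real N) ^ CARD('n)"
  define sd where "sd = sqrt (real CARD('n))"
  define h where "h = L / real N"
  define A where "A = lp * sd * h * L ^ CARD('n)"
  have finG: "finite G" using grid_finite by (simp add: G_def)
  have Gc: "x \<in> cube L" if "x \<in> G" for x using grid_sub_cube that L N by (simp add: G_def)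
  have pG: "p x \<ge> 0" if "x \<in> G" for x using pnn Gc that by blast
  obtain x0 where x0: "x0 \<in> G" "p x0 > 0" using ppos by (auto simp: G_def)
  have "p x0 \<le> S" unfolding S_def using finG x0 pG by (intro member_le_sum) auto
  then have Spos: "S > 0" using x0 by linarith
  have M0: "M \<ge> 0" using gM Gc x0 by force
  have R1: "\<bar>integral (cube L) (\<lambda>x. g x * p x) - T * c\<bar> \<le> K * sd * h + M * A"
    using riemann[OF L N pnn pint plip gc gM gK K]
    by (simp add: T_def c_def sd_def h_def A_def G_def algebra_simps)
  have R0: "\<bar>integral (cube L) (\<lambda>x. 1 * p x) - (\<Sum>x\<in>G. 1 * p x) * c\<bar> \<le> 0 * sd * h + 1 * A"
    using riemann[OF L N pnn pint plip, of "\<lambda>_. 1" 1 0]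
    by (simp add: c_def sd_def h_def A_def G_def algebra_simps)
  have I1: "integral (cube L) p = 1" using pint by (rule integral_unique)
  have R0': "\<bar>1 - S * c\<bar> \<le> A" using R0 I1 by (simp add: S_def)
  have TS: "\<bar>T\<bar> \<le> M * S"
  proof -
    have "\<bar>T\<bar> \<le> (\<Sum>x\<in>G. \<bar>g x * p x\<bar>)" unfolding T_def by (rule sum_abs)
    also have "\<dots> \<le> (\<Sum>x\<in>G. M * p x)"
      using gM Gc pG by (intro sum_mono) (simp add: abs_mult mult_right_mono)
    finally show ?thesis by (simp add: S_def sum_distrib_left)
  qed
  have disc: "(\<Sum>x\<in>grid L N. g x * pbar L N p x) = T / S"
    by (simp add: pbar_def T_def S_def G_def sum_divide_distrib)
  have TS': "\<bar>T / S\<bar> \<le> M" using TS Spos by (simp add: abs_div pos_divide_le_eq mult.commute)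
  have "\<bar>T * c - T / S\<bar> = \<bar>T / S\<bar> * \<bar>S * c - 1\<bar>"
  proof -
    have "T * c - T / S = (T / S) * (S * c - 1)" using Spos by (simp add: field_simps)
    then show ?thesis by (simp add: abs_mult)
  qed
  also have "\<dots> \<le> M * A" using TS' R0' M0 by (intro mult_mono) (auto simp: abs_minus_commute)
  finally have E2: "\<bar>T * c - T / S\<bar> \<le> M * A" .
  have "\<bar>integral (cube L) (\<lambda>x. g x * p x) - T / S\<bar> \<le> K * sd * h + M * A + M * A"
    using R1 E2 by linarith
  moreover have "M * A = M * (lp * sqrt (real CARD('n)) * L ^ (CARD('n) + 1) / real N)"
    by (simp add: A_def h_def sd_def)
  moreover have "K * sd * h = K * sqrt (real CARD('n)) * (L / real N)"
    by (simp add: sd_def h_def)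
  moreover have "2 * M * (lp * sqrt (real CARD('n)) * L ^ (CARD('n) + 1) / real N)
      = M * (lp * sqrt (real CARD('n)) * L ^ (CARD('n) + 1) / real N)
        + M * (lp * sqrt (real CARD('n)) * L ^ (CARD('n) + 1) / real N)" by simp
  ultimately show "\<bar>integral (cube L) (\<lambda>x. g x * p x) - (\<Sum>x\<in>grid L N. g x * pbar L N p x)\<bar>
         \<le> 2 * M * (lp * sqrt (real CARD('n)) * L ^ (CARD('n) + 1) / real N)
           + K * sqrt (real CARD('n)) * (L / real N)"
    using disc by linarith
  show "\<bar>\<Sum>x\<in>grid L N. g x * pbar L N p x\<bar> \<le> M" using disc TS' by simp
  have pc: "continuous_on (cube L) p" using plip lipschitz_on_continuous_on by blast
  have gpi: "(\<lambda>x. g x * p x) integrable_on cube L"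
    unfolding cube_def by (rule integrable_continuous) (use gc pc in \<open>auto intro!: continuous_intros simp: cube_def\<close>)
  have Mph: "((\<lambda>x. M * p x) has_integral M * 1) (cube L)" by (rule has_integral_mult_right[OF pint])
  then have Mpi: "(\<lambda>x. M * p x) integrable_on cube L" by blast
  have "\<bar>integral (cube L) (\<lambda>x. g x * p x)\<bar> \<le> integral (cube L) (\<lambda>x. M * p x)"
    using integral_norm_bound_integral[OF gpi Mpi] gM pnn by (simp add: abs_mult mult_right_mono)
  also have "\<dots> = M" using integral_unique[OF Mph] by simp
  finally show "\<bar>integral (cube L) (\<lambda>x. g x * p x)\<bar> \<le> M" .
qed


theorem mainTheorem12:
  fixes p f :: "real ^ 'n \<Rightarrow> real" and L lp lf :: real and N :: nat
  assumes "L > 0" and "N \<ge> 1"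
    and "\<forall>x\<in>cube L. p x \<ge> 0"
    and "(p has_integral 1) (cube L)"
    and "lipschitz_on lp (cube L) p"
    and "\<exists>x\<in>grid L N. p x > 0"
    and "bounded (f ` cube L)"
    and "lipschitz_on lf (cube L) f"
  shows "(\<bar>mu_cont L p f - mu_disc L N p f\<bar>
           \<le> 2 * supnorm L f * (lp * sqrt (real CARD('n)) * L ^ (CARD('n) + 1) / real N)
             + lf * sqrt (real CARD('n)) * (L / real N)) \<and>
         (\<bar>var_cont L p f - var_disc L N p f\<bar>
           \<le> 6 * (supnorm L f)^2 * (lp * sqrt (real CARD('n)) * L ^ (CARD('n) + 1) / real N)
             + 4 * supnorm L f * lf * sqrt (real CARD('n)) * (L / real N))"
proof -
  note a = assms
  define M where "M = supnorm L f"
  define Q where "Q = lp * sqrt (real CARD('n)) * L ^ (CARD('n) + 1) / real N"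
  define B where "B = sqrt (real CARD('n)) * (L / real N)"
  obtain Bd where Bd: "\<forall>y\<in>f ` cube L. norm y \<le> Bd" using a(7) bounded_iff by metis
  have bdd: "bdd_above ((\<lambda>x. \<bar>f x\<bar>) ` cube L)" using Bd by (intro bdd_aboveI2[of _ _ Bd]) auto
  have fM: "\<forall>x\<in>cube L. \<bar>f x\<bar> \<le> M"
    unfolding M_def supnorm_def using bdd by (auto intro: cSup_upper)
  have c0: "(0::real^'n) \<in> cube L" using a(1) by (simp add: cube_def mem_box_cart)
  have M0: "M \<ge> 0" using fM c0 by force
  have lf0: "lf \<ge> 0" using a(8) lipschitz_on_nonneg by blast
  have fc: "continuous_on (cube L) f" using a(8) lipschitz_on_continuous_on by blast
  have fK: "\<forall>x\<in>cube L. \<forall>y\<in>cube L. \<bar>f x - f y\<bar> \<le> lf * dist x y"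
    using lipschitz_onD[OF a(8)] by (simp add: dist_real_def)
  note ap1 = approx[OF a(1-6) fc fM fK lf0]
  have f2c: "continuous_on (cube L) (\<lambda>x. (f x)^2)" using fc by (intro continuous_intros)
  have f2M: "\<forall>x\<in>cube L. \<bar>(f x)^2\<bar> \<le> M^2"
  proof
    fix x :: "real^'n" assume "x \<in> cube L"
    then have "\<bar>f x\<bar> \<le> M" using fM by blast
    then have "\<bar>f x\<bar>^2 \<le> M^2" by (intro power_mono) auto
    then show "\<bar>(f x)^2\<bar> \<le> M^2" by simp
  qed
  have f2K: "\<forall>x\<in>cube L. \<forall>y\<in>cube L. \<bar>(f x)^2 - (f y)^2\<bar> \<le> (2 * M * lf) * dist x y"
  proof (intro ballI)
    fix x y :: "real^'n" assume xy: "x \<in> cube L" "y \<in> cube L"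
    have "\<bar>(f x)^2 - (f y)^2\<bar> = \<bar>f x + f y\<bar> * \<bar>f x - f y\<bar>"
      by (simp add: power2_eq_square abs_mult[symmetric] algebra_simps)
    also have "\<dots> \<le> (2 * M) * (lf * dist x y)"
    proof (rule mult_mono)
      have "\<bar>f x\<bar> \<le> M" "\<bar>f y\<bar> \<le> M" using fM xy by blast+
      then show "\<bar>f x + f y\<bar> \<le> 2 * M" using abs_triangle_ineq[of "f x" "f y"] by linarith
      show "\<bar>f x - f y\<bar> \<le> lf * dist x y" using fK xy by blast
    qed (use M0 in auto)
    finally show "\<bar>(f x)^2 - (f y)^2\<bar> \<le> (2 * M * lf) * dist x y" by (simp add: mult.assoc)
  qed
  have K2: "2 * M * lf \<ge> 0" using M0 lf0 by simp
  note ap2 = approx[OF a(1-6) f2c f2M f2K K2]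
  have E1: "\<bar>mu_cont L p f - mu_disc L N p f\<bar> \<le> 2 * M * Q + lf * B"
    using ap1(1) unfolding mu_cont_def mu_disc_def Q_def B_def by (simp add: mult.assoc)
  have mu1: "\<bar>mu_cont L p f\<bar> \<le> M" using ap1(2) by (simp add: mu_cont_def)
  have mu2: "\<bar>mu_disc L N p f\<bar> \<le> M" using ap1(3) by (simp add: mu_disc_def)
  have E2: "\<bar>m2_cont L p f - m2_disc L N p f\<bar> \<le> 2 * M^2 * Q + (2 * M * lf) * B"
    using ap2(1) unfolding m2_cont_def m2_disc_def Q_def B_def by (simp add: mult.assoc)
  have B0: "B \<ge> 0" using a(1) by (simp add: B_def)
  have "\<bar>(mu_cont L p f)^2 - (mu_disc L N p f)^2\<bar>
      = \<bar>mu_cont L p f - mu_disc L N p f\<bar> * \<bar>mu_cont L p f + mu_disc L N p f\<bar>"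
    by (simp add: power2_eq_square abs_mult[symmetric] algebra_simps)
  also have "\<dots> \<le> (2 * M * Q + lf * B) * (2 * M)"
  proof (rule mult_mono)
    show "\<bar>mu_cont L p f + mu_disc L N p f\<bar> \<le> 2 * M"
      using mu1 mu2 abs_triangle_ineq[of "mu_cont L p f" "mu_disc L N p f"] by linarith
  qed (use E1 in auto)
  finally have E3: "\<bar>(mu_cont L p f)^2 - (mu_disc L N p f)^2\<bar> \<le> (2 * M * Q + lf * B) * (2 * M)" .
  have "\<bar>var_cont L p f - var_disc L N p f\<bar>
      \<le> \<bar>m2_cont L p f - m2_disc L N p f\<bar> + \<bar>(mu_cont L p f)^2 - (mu_disc L N p f)^2\<bar>"
    unfolding var_cont_def var_disc_def by linarith
  also have "\<dots> \<le> (2 * M^2 * Q + (2 * M * lf) * B) + (2 * M * Q + lf * B) * (2 * M)"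
    using E2 E3 by linarith
  also have "\<dots> = 6 * M^2 * Q + 4 * M * lf * B" by (simp add: power2_eq_square algebra_simps)
  finally have E4: "\<bar>var_cont L p f - var_disc L N p f\<bar> \<le> 6 * M^2 * Q + 4 * M * lf * B" .
  show ?thesis
    using E1 E4 unfolding M_def Q_def B_def by (simp add: mult.assoc)
qed

end
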